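(* Let $(G_n)_{n\in\mathbb{N}}$ be an $\mathrm{FO}$-convergent sequence of finite graphs with a modeling limit $L$, and let $r$ be an algebraic vertex of $L$. Then there is a sequence $(r_n)_{n\in\mathbb{N}}$ with $r_n \in V(G_n)$ such that $(G_n, r_n)$ $\mathrm{FO}$-converges to $(L, r)$, i.e. $\lim_{n\to\infty} \langle \phi, (G_n,r_n)\rangle = \langle \phi, (L,r)\rangle$ for every first-order formula $\phi$ in the language of rooted graphs.
   Context: Graphs are considered as first-order structures in the language with one binary (edge) relation. $\mathrm{FO}_p$ denotes the set of first-order formulas with $p$ free variables in the language of graphs. For $\phi\in\mathrm{FO}_p$ and a structure $G$, $\phi(G)=\{\mathbf{v}\in V(G)^p : G\models\phi(\mathbf{v})\}$. The Stone pairing of $\phi \in \mathrm{FO}_p$, $p\ge 1$, with a finite graph $G$ is $\langle \phi, G\rangle = |\phi(G)|/|V(G)|^p$, the probability that a uniformly random $p$-tuple of vertices satisfies $\phi$; for a sentence ($p=0$), $\langle\phi,G\rangle=1$ if $G\models\phi$ and $0$ otherwise. A sequence of finite graphs $(G_n)$ is $\mathrm{FO}$-convergent if $(\langle\phi,G_n\rangle)$ converges for every formula $\phi$. A modeling is a graph $L$ whose vertex set is a standard Borel space equipped with a probability measure $\nu$ such that every first-order definable set $\phi(L)\subseteq V(L)^p$ is measurable (in the product $\sigma$-algebra); one sets $\langle\phi,L\rangle=\nu^{\otimes p}(\phi(L))$ (and $1$ or $0$ for sentences according to truth). $L$ is a modeling limit of $(G_n)$ if $\lim_n\langle\phi,G_n\rangle=\langle\phi,L\rangle$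 for all formulas $\phi$. The language of rooted graphs extends the language of graphs by a constant symbol $\mathrm{Root}$; $(G,r)$ denotes $G$ with $\mathrm{Root}$ interpreted as the vertex $r$, and Stone pairings of formulas of this extended language with $(G,r)$ or $(L,r)$ are defined in the same way. A formula $\xi(x)$ with one free variable is algebraic in $L$ if $\xi(L)$ is finite; a vertex of $L$ is algebraic if it belongs to $\xi(L)$ for some formula $\xi(x)$ (of the language of graphs) algebraic in $L$. *)

theory Defs
  imports "HOL-Probability.Probability"
begin

text \<open>Terms: variables (indexed by natural numbers) or the constant Root.
  Formulas of the language of rooted graphs; the language of graphs is the
  fragment not using Root.\<close>

datatype tm = Var nat | Root

datatype fo =
    FFalse
  | FEq tm tm
  | FAdj tm tm
  | FNot fo
  | FAnd fo fo
  | FOr fo fo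
  | FEx nat fo
  | FAll nat fo

fun tm_vars :: "tm \<Rightarrow> nat set" where
  "tm_vars (Var i) = {i}"
| "tm_vars Root = {}"

fun fv :: "fo \<Rightarrow> nat set" where
  "fv FFalse = {}"
| "fv (FEq s t) = tm_vars s \<union> tm_vars t"
| "fv (FAdj s t) = tm_vars s \<union> tm_vars t"
| "fv (FNot \<phi>) = fv \<phi>"
| "fv (FAnd \<phi> \<psi>) = fv \<phi> \<union> fv \<psi>"
| "fv (FOr \<phi> \<psi>) = fv \<phi> \<union> fv \<psi>"
| "fv (FEx x \<phi>) = fv \<phi> - {x}"
| "fv (FAll x \<phi>) = fv \<phi> - {x}"

fun tm_root :: "tm \<Rightarrow> bool" where
  "tm_root (Var i) = False"
| "tm_root Root = True"

fun uses_root :: "fo \<Rightarrow> bool" where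
  "uses_root FFalse = False"
| "uses_root (FEq s t) = (tm_root s \<or> tm_root t)"
| "uses_root (FAdj s t) = (tm_root s \<or> tm_root t)"
| "uses_root (FNot \<phi>) = uses_root \<phi>"
| "uses_root (FAnd \<phi> \<psi>) = (uses_root \<phi> \<or> uses_root \<psi>)"
| "uses_root (FOr \<phi> \<psi>) = (uses_root \<phi> \<or> uses_root \<psi>)"
| "uses_root (FEx x \<phi>) = uses_root \<phi>"
| "uses_root (FAll x \<phi>) = uses_root \<phi>"

definition FO :: "nat \<Rightarrow> fo set" where
  "FO p = {\<phi>. \<not> uses_root \<phi> \<and> fv \<phi> \<subseteq> {..<p}}"

definition FO_rooted :: "nat \<Rightarrow> fo set" where
  "FO_rooted p = {\<phi>. fv \<phi> \<subseteq> {..<p}}"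

fun tm_eval :: "'a \<Rightarrow> (nat \<Rightarrow> 'a) \<Rightarrow> tm \<Rightarrow> 'a" where
  "tm_eval r a (Var i) = a i"
| "tm_eval r a Root = r"

fun sat :: "'a set \<Rightarrow> ('a \<Rightarrow> 'a \<Rightarrow> bool) \<Rightarrow> 'a \<Rightarrow> (nat \<Rightarrow> 'a) \<Rightarrow> fo \<Rightarrow> bool" where
  "sat V E r a FFalse = False"
| "sat V E r a (FEq s t) = (tm_eval r a s = tm_eval r a t)"
| "sat V E r a (FAdj s t) = E (tm_eval r a s) (tm_eval r a t)"
| "sat V E r a (FNot \<phi>) = (\<not> sat V E r a \<phi>)"
| "sat V E r a (FAnd \<phi> \<psi>) = (sat V E r a \<phi> \<and> sat V E r a \<psi>)"
| "sat V E r a (FOr \<phi> \<psi>) = (sat V E r a \<phi> \<or> sat V E r a \<psi>)"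
| "sat V E r a (FEx x \<phi>) = (\<exists>v\<in>V. sat V E r (a(x := v)) \<phi>)"
| "sat V E r a (FAll x \<phi>) = (\<forall>v\<in>V. sat V E r (a(x := v)) \<phi>)"

definition graph :: "'a set \<Rightarrow> ('a \<Rightarrow> 'a \<Rightarrow> bool) \<Rightarrow> bool" where
  "graph V E \<longleftrightarrow> (\<forall>u\<in>V. \<forall>v\<in>V. E u v \<longrightarrow> E v u) \<and> (\<forall>v\<in>V. \<not> E v v)"

definition finite_graph :: "'a set \<Rightarrow> ('a \<Rightarrow> 'a \<Rightarrow> bool) \<Rightarrow> bool" where
  "finite_graph V E \<longleftrightarrow> graph V E \<and> finite V \<and> V \<noteq> {}"

text \<open>The definable set phi(G) in V^p, p-tuples represented as functions on {..<p}
  (extensional, i.e. undefined outside {..<p}).\<close>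
definition defset :: "'a set \<Rightarrow> ('a \<Rightarrow> 'a \<Rightarrow> bool) \<Rightarrow> 'a \<Rightarrow> nat \<Rightarrow> fo \<Rightarrow> (nat \<Rightarrow> 'a) set" where
  "defset V E r p \<phi> = {xs \<in> PiE {..<p} (\<lambda>_. V). sat V E r xs \<phi>}"

text \<open>Stone pairing with a finite (rooted) graph; Root interpreted as r
  (irrelevant for formulas of the plain language of graphs).\<close>
definition stone_fin :: "'a set \<Rightarrow> ('a \<Rightarrow> 'a \<Rightarrow> bool) \<Rightarrow> 'a \<Rightarrow> nat \<Rightarrow> fo \<Rightarrow> real" where
  "stone_fin V E r p \<phi> =
     (if p = 0 then (if sat V E r (\<lambda>_. undefined) \<phi> then 1 else 0)
      else real (card (defset V E r p \<phi>)) / real (card V) ^ p)"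

definition Polish_space :: "'a topology \<Rightarrow> bool" where
  "Polish_space T \<longleftrightarrow> completely_metrizable_space T \<and> separable_space T"

definition standard_borel :: "'a measure \<Rightarrow> bool" where
  "standard_borel M \<longleftrightarrow>
     (\<exists>T. Polish_space T \<and> topspace T = space M \<and>
          sets M = sigma_sets (space M) {U. openin T U})"

definition modeling :: "'b measure \<Rightarrow> ('b \<Rightarrow> 'b \<Rightarrow> bool) \<Rightarrow> bool" where
  "modeling M E \<longleftrightarrow> prob_space M \<and> standard_borel M \<and> graph (space M) E \<and>
     (\<forall>p. \<forall>\<phi>\<in>FO p. defset (space M) E undefined p \<phi> \<in> sets (PiM {..<p} (\<lambda>_. M)))"

definition stone_mod :: "'b measure \<Rightarrow> ('b \<Rightarrow> 'b \<Rightarrow> bool) \<Rightarrow> 'b \<Rightarrow> nat \<Rightarrow> fo \<Rightarrow> real" where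
  "stone_mod M E r p \<phi> =
     (if p = 0 then (if sat (space M) E r (\<lambda>_. undefined) \<phi> then 1 else 0)
      else measure (PiM {..<p} (\<lambda>_. M)) (defset (space M) E r p \<phi>))"

definition FO_convergent :: "(nat \<Rightarrow> 'a set) \<Rightarrow> (nat \<Rightarrow> 'a \<Rightarrow> 'a \<Rightarrow> bool) \<Rightarrow> bool" where
  "FO_convergent V E \<longleftrightarrow>
     (\<forall>p. \<forall>\<phi>\<in>FO p. convergent (\<lambda>n. stone_fin (V n) (E n) undefined p \<phi>))"

definition modeling_limit ::
  "'b measure \<Rightarrow> ('b \<Rightarrow> 'b \<Rightarrow> bool) \<Rightarrow> (nat \<Rightarrow> 'a set) \<Rightarrow> (nat \<Rightarrow> 'a \<Rightarrow> 'a \<Rightarrow> bool) \<Rightarrow> bool" where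
  "modeling_limit M EL V E \<longleftrightarrow> modeling M EL \<and>
     (\<forall>p. \<forall>\<phi>\<in>FO p.
        (\<lambda>n. stone_fin (V n) (E n) undefined p \<phi>) \<longlonglongrightarrow> stone_mod M EL undefined p \<phi>)"

definition algebraic_vertex :: "'b set \<Rightarrow> ('b \<Rightarrow> 'b \<Rightarrow> bool) \<Rightarrow> 'b \<Rightarrow> bool" where
  "algebraic_vertex V E r \<longleftrightarrow>
     (\<exists>\<xi>\<in>FO 1. finite {v\<in>V. sat V E undefined (\<lambda>_. v) \<xi>} \<and>
                r \<in> {v\<in>V. sat V E undefined (\<lambda>_. v) \<xi>})"

end

theory Submission
  imports Defs "HOL-Library.Countable"
begin

fun tren :: "(nat \<Rightarrow> nat) \<Rightarrow> tm \<Rightarrow> tm \<Rightarrow> tm" where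
  "tren \<sigma> \<rho> (Var i) = Var (\<sigma> i)"
| "tren \<sigma> \<rho> Root = \<rho>"

fun ren :: "(nat \<Rightarrow> nat) \<Rightarrow> tm \<Rightarrow> fo \<Rightarrow> fo" where
  "ren \<sigma> \<rho> FFalse = FFalse"
| "ren \<sigma> \<rho> (FEq s t) = FEq (tren \<sigma> \<rho> s) (tren \<sigma> \<rho> t)"
| "ren \<sigma> \<rho> (FAdj s t) = FAdj (tren \<sigma> \<rho> s) (tren \<sigma> \<rho> t)"
| "ren \<sigma> \<rho> (FNot \<phi>) = FNot (ren \<sigma> \<rho> \<phi>)"
| "ren \<sigma> \<rho> (FAnd \<phi> \<psi>) = FAnd (ren \<sigma> \<rho> \<phi>) (ren \<sigma> \<rho> \<psi>)"
| "ren \<sigma> \<rho> (FOr \<phi> \<psi>) = FOr (ren \<sigma> \<rho> \<phi>) (ren \<sigma> \<rho> \<psi>)"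
| "ren \<sigma> \<rho> (FEx x \<phi>) = FEx (\<sigma> x) (ren \<sigma> \<rho> \<phi>)"
| "ren \<sigma> \<rho> (FAll x \<phi>) = FAll (\<sigma> x) (ren \<sigma> \<rho> \<phi>)"

definition okroot :: "(nat \<Rightarrow> nat) \<Rightarrow> tm \<Rightarrow> bool" where
  "okroot \<sigma> \<rho> \<longleftrightarrow> (\<forall>z. \<rho> = Var z \<longrightarrow> z \<notin> range \<sigma>)"

lemma tm_eval_tren:
  "tm_eval r a (tren \<sigma> \<rho> t) = tm_eval (tm_eval r a \<rho>) (a \<circ> \<sigma>) t"
  by (cases t) auto

lemma sat_ren:
  assumes "inj \<sigma>" "okroot \<sigma> \<rho>"
  shows "sat V E r a (ren \<sigma> \<rho> \<phi>) = sat V E (tm_eval r a \<rho>) (a \<circ> \<sigma>) \<phi>"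
  using assms
proof (induction \<phi> arbitrary: a)
  case (FEx x \<phi>)
  have 1: "tm_eval r (a(\<sigma> x := v)) \<rho> = tm_eval r a \<rho>" for v
    using FEx.prems by (cases \<rho>) (auto simp: okroot_def)
  have 2: "(a(\<sigma> x := v)) \<circ> \<sigma> = (a \<circ> \<sigma>)(x := v)" for v
    using FEx.prems by (auto simp: fun_eq_iff inj_eq)
  have 3: "sat V E r (a(\<sigma> x := v)) (ren \<sigma> \<rho> \<phi>) = sat V E (tm_eval r a \<rho>) ((a \<circ> \<sigma>)(x := v)) \<phi>" for v
    by (simp only: FEx.IH[OF FEx.prems] 1 2)
  show ?case by (simp only: ren.simps sat.simps 3)
next
  case (FAll x \<phi>)
  have 1: "tm_eval r (a(\<sigma> x := v)) \<rho> = tm_eval r a \<rho>" for v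
    using FAll.prems by (cases \<rho>) (auto simp: okroot_def)
  have 2: "(a(\<sigma> x := v)) \<circ> \<sigma> = (a \<circ> \<sigma>)(x := v)" for v
    using FAll.prems by (auto simp: fun_eq_iff inj_eq)
  have 3: "sat V E r (a(\<sigma> x := v)) (ren \<sigma> \<rho> \<phi>) = sat V E (tm_eval r a \<rho>) ((a \<circ> \<sigma>)(x := v)) \<phi>" for v
    by (simp only: FAll.IH[OF FAll.prems] 1 2)
  show ?case by (simp only: ren.simps sat.simps 3)
qed (auto simp: tm_eval_tren)

lemma tm_eval_cong: "(\<And>i. i \<in> tm_vars t \<Longrightarrow> a i = b i) \<Longrightarrow> tm_eval r a t = tm_eval r b t"
  by (cases t) auto

lemma sat_cong:
  "(\<And>i. i \<in> fv \<phi> \<Longrightarrow> a i = b i) \<Longrightarrow> sat V E r a \<phi> = sat V E r b \<phi>"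
proof (induction \<phi> arbitrary: a b)
  case (FEq s t)
  then show ?case using tm_eval_cong[of s a b r] tm_eval_cong[of t a b r] by auto
next
  case (FAdj s t)
  then show ?case using tm_eval_cong[of s a b r] tm_eval_cong[of t a b r] by auto
next
  case (FEx x \<phi>)
  have "sat V E r (a(x:=v)) \<phi> = sat V E r (b(x:=v)) \<phi>" for v
    by (rule FEx.IH) (use FEx.prems in auto)
  then show ?case by simp
next
  case (FAll x \<phi>)
  have "sat V E r (a(x:=v)) \<phi> = sat V E r (b(x:=v)) \<phi>" for v
    by (rule FAll.IH) (use FAll.prems in auto)
  then show ?case by simp
next
  case (FNot \<phi>)
  then show ?case by (metis fv.simps(4) sat.simps(4))
next
  case (FAnd \<phi> \<psi>)
  have "sat V E r a \<phi> = sat V E r b \<phi>" by (rule FAnd.IH(1)) (use FAnd.prems in auto)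
  moreover have "sat V E r a \<psi> = sat V E r b \<psi>" by (rule FAnd.IH(2)) (use FAnd.prems in auto)
  ultimately show ?case by simp
next
  case (FOr \<phi> \<psi>)
  have "sat V E r a \<phi> = sat V E r b \<phi>" by (rule FOr.IH(1)) (use FOr.prems in auto)
  moreover have "sat V E r a \<psi> = sat V E r b \<psi>" by (rule FOr.IH(2)) (use FOr.prems in auto)
  ultimately show ?case by simp
qed simp

lemma tm_eval_noroot: "\<not> tm_root t \<Longrightarrow> tm_eval r a t = tm_eval r' a t"
  by (cases t) auto

lemma sat_noroot:
  "\<not> uses_root \<phi> \<Longrightarrow> sat V E r a \<phi> = sat V E r' a \<phi>"
proof (induction \<phi> arbitrary: a)
  case (FEq s t)
  then show ?case using tm_eval_noroot[of s r a r'] tm_eval_noroot[of t r a r'] by auto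
next
  case (FAdj s t)
  then show ?case using tm_eval_noroot[of s r a r'] tm_eval_noroot[of t r a r'] by auto
qed auto

lemma fv_ren:
  assumes "inj \<sigma>"
  shows "fv (ren \<sigma> \<rho> \<phi>) \<subseteq> \<sigma> ` fv \<phi> \<union> tm_vars \<rho>"
proof (induction \<phi>)
  case (FEq s t) then show ?case by (cases s; cases t) auto
next
  case (FAdj s t) then show ?case by (cases s; cases t) auto
next
  case (FEx x \<phi>) then show ?case using assms by (auto simp: inj_eq) 
next
  case (FAll x \<phi>) then show ?case using assms by (auto simp: inj_eq) 
qed auto

lemma uses_root_ren_var: "\<not> uses_root (ren \<sigma> (Var z) \<phi>)"
proof (induction \<phi>)
  case (FEq s t) then show ?case by (cases s; cases t) auto
next
  case (FAdj s t) then show ?case by (cases s; cases t) auto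
qed auto

lemma uses_root_ren_root: "uses_root (ren \<sigma> Root \<phi>) = uses_root \<phi>"
proof (induction \<phi>)
  case (FEq s t) then show ?case by (cases s; cases t) auto
next
  case (FAdj s t) then show ?case by (cases s; cases t) auto
qed auto

fun vars :: "fo \<Rightarrow> nat set" where
  "vars FFalse = {}"
| "vars (FEq s t) = tm_vars s \<union> tm_vars t"
| "vars (FAdj s t) = tm_vars s \<union> tm_vars t"
| "vars (FNot \<phi>) = vars \<phi>"
| "vars (FAnd \<phi> \<psi>) = vars \<phi> \<union> vars \<psi>"
| "vars (FOr \<phi> \<psi>) = vars \<phi> \<union> vars \<psi>"
| "vars (FEx x \<phi>) = insert x (vars \<phi>)"
| "vars (FAll x \<phi>) = insert x (vars \<phi>)"

lemma finite_tm_vars: "finite (tm_vars t)" by (cases t) auto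
lemma finite_vars: "finite (vars \<phi>)" by (induction \<phi>) (auto simp: finite_tm_vars)
lemma fv_vars: "fv \<phi> \<subseteq> vars \<phi>" by (induction \<phi>) auto

definition fresh :: "nat \<Rightarrow> fo \<Rightarrow> nat" where
  "fresh y \<psi> = Suc (Max (insert y (vars \<psi>)))"

lemma fresh_ne: "fresh y \<psi> \<noteq> y" "fresh y \<psi> \<notin> vars \<psi>"
proof -
  have "y \<le> Max (insert y (vars \<psi>))" "\<And>v. v \<in> vars \<psi> \<Longrightarrow> v \<le> Max (insert y (vars \<psi>))"
    by (auto simp: finite_vars)
  then show "fresh y \<psi> \<noteq> y" "fresh y \<psi> \<notin> vars \<psi>" unfolding fresh_def by force+
qed

definition sw :: "nat \<Rightarrow> nat \<Rightarrow> nat \<Rightarrow> nat" where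
  "sw y z i = (if i = y then z else if i = z then y else i)"

lemma inj_sw: "inj (sw y z)"
  by (auto simp: inj_def sw_def split: if_splits)

fun atl :: "nat \<Rightarrow> nat \<Rightarrow> fo \<Rightarrow> fo" where
  "atl y 0 \<psi> = FNot FFalse"
| "atl y (Suc c) \<psi> = FEx (fresh y \<psi>) (FAnd (ren (sw y (fresh y \<psi>)) Root \<psi>)
      (atl y c (FAnd \<psi> (FNot (FEq (Var y) (Var (fresh y \<psi>)))))))"

lemma fv_atl: "fv (atl y c \<psi>) \<subseteq> fv \<psi> - {y}"
proof (induction c arbitrary: \<psi>)
  case 0 then show ?case by simp
next
  case (Suc c)
  define z where "z = fresh y \<psi>"
  have zy: "z \<noteq> y" "z \<notin> vars \<psi>" using fresh_ne z_def by auto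
  have a: "fv (ren (sw y z) Root \<psi>) \<subseteq> sw y z ` fv \<psi>"
    using fv_ren[OF inj_sw, of y z Root \<psi>] by simp
  have b: "sw y z ` fv \<psi> \<subseteq> insert z (fv \<psi> - {y})"
    using zy fv_vars[of \<psi>] by (auto simp: sw_def)
  have c: "fv (atl y c (FAnd \<psi> (FNot (FEq (Var y) (Var z))))) \<subseteq> (fv \<psi> \<union> {y, z}) - {y}"
    using Suc.IH[of "FAnd \<psi> (FNot (FEq (Var y) (Var z)))"] by auto
  show ?case using a b c zy by (auto simp: z_def[symmetric])
qed

lemma uses_root_atl: "\<not> uses_root \<psi> \<Longrightarrow> \<not> uses_root (atl y c \<psi>)"
  by (induction c arbitrary: \<psi>) (auto simp: uses_root_ren_root)

lemma sat_atl:
  assumes "finite {v\<in>V. sat V E r (a(y:=v)) \<psi>}"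
  shows "sat V E r a (atl y c \<psi>) \<longleftrightarrow> c \<le> card {v\<in>V. sat V E r (a(y:=v)) \<psi>}"
  using assms
proof (induction c arbitrary: \<psi> a)
  case 0 then show ?case by simp
next
  case (Suc c)
  define z where "z = fresh y \<psi>"
  have zy: "z \<noteq> y" "z \<notin> vars \<psi>" using fresh_ne z_def by auto
  define S where "S = {v\<in>V. sat V E r (a(y:=v)) \<psi>}"
  have 1: "sat V E r (a(z:=w)) (ren (sw y z) Root \<psi>) = (w \<in> S)" if "w \<in> V" for w
  proof -
    have "sat V E r (a(z:=w)) (ren (sw y z) Root \<psi>) = sat V E r ((a(z:=w)) \<circ> sw y z) \<psi>"
      by (simp add: sat_ren[OF inj_sw] okroot_def)
    also have "\<dots> = sat V E r (a(y:=w)) \<psi>"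
      by (rule sat_cong) (use zy fv_vars[of \<psi>] in \<open>auto simp: sw_def\<close>)
    finally show ?thesis using that by (simp add: S_def)
  qed
  have 2: "{v\<in>V. sat V E r ((a(z:=w))(y:=v)) (FAnd \<psi> (FNot (FEq (Var y) (Var z))))} = S - {w}" for w
  proof -
    have "sat V E r ((a(z:=w))(y:=v)) \<psi> = sat V E r (a(y:=v)) \<psi>" for v
      by (rule sat_cong) (use zy fv_vars[of \<psi>] in auto)
    then show ?thesis using zy by (auto simp: S_def)
  qed
  have fin: "finite S" using Suc.prems unfolding S_def .
  have "sat V E r a (atl y (Suc c) \<psi>) \<longleftrightarrow>
        (\<exists>w\<in>V. w \<in> S \<and> sat V E r (a(z:=w)) (atl y c (FAnd \<psi> (FNot (FEq (Var y) (Var z))))))"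
    using 1 by (auto simp: z_def[symmetric])
  also have "\<dots> \<longleftrightarrow> (\<exists>w\<in>V. w \<in> S \<and> c \<le> card (S - {w}))"
  proof -
    have "sat V E r (a(z:=w)) (atl y c (FAnd \<psi> (FNot (FEq (Var y) (Var z))))) \<longleftrightarrow> c \<le> card (S - {w})" for w
      using Suc.IH[of "a(z:=w)" "FAnd \<psi> (FNot (FEq (Var y) (Var z)))", unfolded 2[of w]] fin by blast
    then show ?thesis by simp
  qed
  also have "\<dots> \<longleftrightarrow> Suc c \<le> card S"
  proof
    assume "\<exists>w\<in>V. w \<in> S \<and> c \<le> card (S - {w})"
    then obtain w where "w \<in> S" "c \<le> card (S - {w})" by auto
    then show "Suc c \<le> card S" using fin
      by (metis card_Diff1_less le_less_trans Suc_leI)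
  next
    assume a: "Suc c \<le> card S"
    then have "S \<noteq> {}" by auto
    then obtain w where w: "w \<in> S" by auto
    then have "w \<in> V" by (auto simp: S_def)
    moreover have "c \<le> card (S - {w})" using a w fin by (simp add: card_Diff_singleton)
    ultimately show "\<exists>w\<in>V. w \<in> S \<and> c \<le> card (S - {w})" using w by auto
  qed
  finally show ?case unfolding S_def .
qed

fun fconj :: "fo list \<Rightarrow> fo" where
  "fconj [] = FNot FFalse"
| "fconj (\<phi> # \<phi>s) = FAnd \<phi> (fconj \<phi>s)"

lemma sat_fconj: "sat V E r a (fconj \<phi>s) \<longleftrightarrow> (\<forall>\<phi>\<in>set \<phi>s. sat V E r a \<phi>)"
  by (induction \<phi>s) auto

lemma fv_fconj: "fv (fconj \<phi>s) = \<Union> (fv ` set \<phi>s)"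
  by (induction \<phi>s) auto

lemma uses_root_fconj: "uses_root (fconj \<phi>s) \<longleftrightarrow> (\<exists>\<phi>\<in>set \<phi>s. uses_root \<phi>)"
  by (induction \<phi>s) auto

lemma stone_mod_measure:
  "stone_mod M E r p \<phi> = measure (PiM {..<p} (\<lambda>_. M)) (defset (space M) E r p \<phi>)"
proof (cases "p = 0")
  case True
  have "defset (space M) E r 0 \<phi> = (if sat (space M) E r (\<lambda>_. undefined) \<phi> then {\<lambda>_. undefined} else {})"
    by (auto simp: defset_def)
  then show ?thesis using True by (simp add: stone_mod_def PiM_empty)
qed (simp add: stone_mod_def)

definition shf :: "nat \<Rightarrow> nat \<Rightarrow> (nat \<Rightarrow> 'b) \<Rightarrow> (nat \<Rightarrow> 'b)" where
  "shf N q X = (\<lambda>i\<in>{..<q}. X (N + i))"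

locale fstr =
  fixes M :: "'b measure" and E :: "'b \<Rightarrow> 'b \<Rightarrow> bool"
  assumes prob: "prob_space M"
    and meas: "\<And>p \<phi>. \<phi> \<in> FO p \<Longrightarrow> defset (space M) E undefined p \<phi> \<in> sets (PiM {..<p} (\<lambda>_. M))"
begin

abbreviation PM :: "nat \<Rightarrow> (nat \<Rightarrow> 'b) measure" where
  "PM p \<equiv> PiM {..<p} (\<lambda>_. M)"

lemma prob_PM: "prob_space (PM p)"
  by (rule prob_space_PiM) (use prob in auto)

lemma defset_meas:
  assumes y: "y \<in> space M" and fvp: "fv \<phi> \<subseteq> {..<p}"
  shows "defset (space M) E y p \<phi> \<in> sets (PM p)"
proof -
  define \<sigma> where "\<sigma> = (\<lambda>i::nat. if i < p then i else Suc i)"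
  have inj: "inj \<sigma>" by (auto simp: inj_def \<sigma>_def split: if_splits)
  have ok: "okroot \<sigma> (Var p)" by (auto simp: okroot_def \<sigma>_def split: if_splits)
  define \<phi>' where "\<phi>' = ren \<sigma> (Var p) \<phi>"
  have "fv \<phi>' \<subseteq> {..<Suc p}"
    using fv_ren[OF inj, of "Var p" \<phi>] fvp by (auto simp: \<phi>'_def \<sigma>_def)
  then have FO: "\<phi>' \<in> FO (Suc p)" by (simp add: FO_def \<phi>'_def uses_root_ren_var)
  define g where "g = (\<lambda>x. \<lambda>i\<in>{..<Suc p}. if i < p then x i else y)"
  have gm: "g \<in> PM p \<rightarrow>\<^sub>M PM (Suc p)"
    unfolding g_def
  proof (rule measurable_restrict)
    fix i assume "i \<in> {..<Suc p}"
    show "(\<lambda>x. if i < p then x i else y) \<in> PM p \<rightarrow>\<^sub>M M"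
      by (cases "i < p") (auto intro: measurable_component_singleton simp: y)
  qed
  have key: "sat (space M) E undefined (g x) \<phi>' = sat (space M) E y x \<phi>" for x
  proof -
    have "sat (space M) E undefined (g x) \<phi>' = sat (space M) E (g x p) (g x \<circ> \<sigma>) \<phi>"
      unfolding \<phi>'_def by (simp add: sat_ren[OF inj ok])
    also have "g x p = y" by (simp add: g_def)
    also have "sat (space M) E y (g x \<circ> \<sigma>) \<phi> = sat (space M) E y x \<phi>"
    proof (rule sat_cong)
      fix i assume "i \<in> fv \<phi>"
      then have "i < p" using fvp by auto
      then show "(g x \<circ> \<sigma>) i = x i" by (simp add: g_def \<sigma>_def)
    qed
    finally show ?thesis .
  qed
  have gx: "g x \<in> PiE {..<Suc p} (\<lambda>_. space M)" if "x \<in> PiE {..<p} (\<lambda>_. space M)" for x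
    unfolding g_def restrict_PiE_iff using that y by (auto dest: PiE_mem)
  have "defset (space M) E y p \<phi> = g -` defset (space M) E undefined (Suc p) \<phi>' \<inter> space (PM p)"
    using gx key by (auto simp: defset_def space_PiM)
  also have "\<dots> \<in> sets (PM p)"
    by (rule measurable_sets[OF gm meas[OF FO]])
  finally show ?thesis .
qed

lemma shf_meas: "shf N q \<in> PM (N + q) \<rightarrow>\<^sub>M PM q"
  unfolding shf_def
  by (rule measurable_restrict) (auto intro: measurable_component_singleton)

lemma block2:
  assumes A: "A \<in> sets (PM N)" and B: "B \<in> sets (PM q)"
  defines "S \<equiv> {X \<in> PiE {..<N+q} (\<lambda>_. space M). restrict X {..<N} \<in> A \<and> shf N q X \<in> B}"
  shows "S \<in> sets (PM (N+q))" "measure (PM (N+q)) S = measure (PM N) A * measure (PM q) B"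
proof -
  interpret P: product_sigma_finite "\<lambda>_. M"
    unfolding product_sigma_finite_def using prob_space_imp_sigma_finite[OF prob] by simp
  have f1: "(\<lambda>X. restrict X {..<N}) \<in> PM (N+q) \<rightarrow>\<^sub>M PM N"
    by (rule measurable_restrict_subset) auto
  have Seq: "S = ((\<lambda>X. restrict X {..<N}) -` A \<inter> space (PM (N+q))) \<inter> (shf N q -` B \<inter> space (PM (N+q)))"
    by (auto simp: S_def space_PiM)
  show Sm: "S \<in> sets (PM (N+q))"
    unfolding Seq by (rule sets.Int[OF measurable_sets[OF f1 A] measurable_sets[OF shf_meas[of N q] B]])
  define I where "I = {..<N}"
  define J where "J = {N..<N+q}"
  have IJ: "{..<N+q} = I \<union> J" "I \<inter> J = {}" "finite I" "finite J" by (auto simp: I_def J_def)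
  interpret PI: prob_space "PiM I (\<lambda>_. M)" by (rule prob_space_PiM) (use prob in auto)
  interpret PJ: prob_space "PiM J (\<lambda>_. M)" by (rule prob_space_PiM) (use prob in auto)
  define f2 :: "(nat \<Rightarrow> 'b) \<Rightarrow> (nat \<Rightarrow> 'b)" where "f2 = (\<lambda>Y. \<lambda>i\<in>{..<q}. Y (N + i))"
  have f2m: "f2 \<in> PiM J (\<lambda>_. M) \<rightarrow>\<^sub>M PM q"
    unfolding f2_def by (rule measurable_restrict) (auto intro: measurable_component_singleton simp: J_def)
  define B' where "B' = f2 -` B \<inter> space (PiM J (\<lambda>_. M))"
  have B'm: "B' \<in> sets (PiM J (\<lambda>_. M))" unfolding B'_def by (rule measurable_sets[OF f2m B])
  have pre: "merge I J -` S \<inter> space (PiM I (\<lambda>_. M) \<Otimes>\<^sub>M PiM J (\<lambda>_. M)) = A \<times> B'"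
  proof (intro set_eqI iffI)
    fix z assume z: "z \<in> merge I J -` S \<inter> space (PiM I (\<lambda>_. M) \<Otimes>\<^sub>M PiM J (\<lambda>_. M))"
    obtain x y where zxy: "z = (x, y)" by (cases z)
    have x: "x \<in> PiE I (\<lambda>_. space M)" and y: "y \<in> PiE J (\<lambda>_. space M)"
      using z zxy by (auto simp: space_pair_measure space_PiM)
    have r1: "restrict (merge I J (x, y)) {..<N} = x"
      using x by (auto simp: merge_def I_def fun_eq_iff PiE_def extensional_def)
    have r2: "shf N q (merge I J (x, y)) = f2 y"
      using y by (auto simp: merge_def I_def J_def fun_eq_iff shf_def f2_def)
    show "z \<in> A \<times> B'" using z zxy r1 r2 y by (auto simp: S_def B'_def space_PiM)
  next
    fix z assume z: "z \<in> A \<times> B'"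
    obtain x y where zxy: "z = (x, y)" by (cases z)
    have x: "x \<in> PiE I (\<lambda>_. space M)" using z zxy sets.sets_into_space[OF A]
      by (auto simp: space_PiM I_def)
    have y: "y \<in> PiE J (\<lambda>_. space M)" using z zxy by (auto simp: B'_def space_PiM)
    have r1: "restrict (merge I J (x, y)) {..<N} = x"
      using x by (auto simp: merge_def I_def fun_eq_iff PiE_def extensional_def)
    have r2: "shf N q (merge I J (x, y)) = f2 y"
      using y by (auto simp: merge_def I_def J_def fun_eq_iff shf_def f2_def)
    have mg: "merge I J (x, y) \<in> PiE {..<N+q} (\<lambda>_. space M)"
      using x y IJ(1) by (auto simp: merge_def PiE_def extensional_def Pi_def)
    show "z \<in> merge I J -` S \<inter> space (PiM I (\<lambda>_. M) \<Otimes>\<^sub>M PiM J (\<lambda>_. M))"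
      using z zxy r1 r2 x y mg by (auto simp: S_def B'_def space_pair_measure space_PiM)
  qed
  have "emeasure (PM (N+q)) S = emeasure (distr (PiM I (\<lambda>_. M) \<Otimes>\<^sub>M PiM J (\<lambda>_. M)) (PiM (I \<union> J) (\<lambda>_. M)) (merge I J)) S"
    using P.distr_merge[OF IJ(2-4)] IJ(1) by simp
  also have "\<dots> = emeasure (PiM I (\<lambda>_. M) \<Otimes>\<^sub>M PiM J (\<lambda>_. M)) (A \<times> B')"
    using Sm IJ(1) by (subst emeasure_distr) (auto simp: pre measurable_merge)
  also have "\<dots> = emeasure (PiM I (\<lambda>_. M)) A * emeasure (PiM J (\<lambda>_. M)) B'"
    using A B'm by (intro PJ.emeasure_pair_measure_Times) (auto simp: I_def)
  also have "emeasure (PiM J (\<lambda>_. M)) B' = emeasure (distr (PiM J (\<lambda>_. M)) (PM q) f2) B"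
    using B f2m by (simp add: emeasure_distr B'_def)
  also have "distr (PiM J (\<lambda>_. M)) (PM q) f2 = PM q"
    unfolding f2_def
    using distr_PiM_reindex[of J "\<lambda>_. M" "(+) N" "{..<q}"] prob by (auto simp: J_def)
  finally have "emeasure (PM (N+q)) S = emeasure (PM N) A * emeasure (PM q) B"
    by (simp add: I_def)
  then show "measure (PM (N+q)) S = measure (PM N) A * measure (PM q) B"
    by (simp add: measure_def enn2real_mult)
qed

end

context fstr
begin

lemma padding:
  assumes y: "y \<in> space M" and fvp: "fv \<phi> \<subseteq> {..<p}" and pP: "p \<le> P"
  shows "measure (PM P) (defset (space M) E y P \<phi>) = measure (PM p) (defset (space M) E y p \<phi>)"
proof -
  define q where "q = P - p"
  have P: "P = p + q" using pP by (simp add: q_def)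
  have A: "defset (space M) E y p \<phi> \<in> sets (PM p)" by (rule defset_meas[OF y fvp])
  have B: "space (PM q) \<in> sets (PM q)" by simp
  have eq: "defset (space M) E y P \<phi> =
    {X \<in> PiE {..<p+q} (\<lambda>_. space M). restrict X {..<p} \<in> defset (space M) E y p \<phi> \<and> shf p q X \<in> space (PM q)}"
  proof (intro set_eqI iffI)
    fix X assume X: "X \<in> defset (space M) E y P \<phi>"
    then have XP: "X \<in> PiE {..<p+q} (\<lambda>_. space M)" and s: "sat (space M) E y X \<phi>"
      unfolding defset_def P by blast+
    have s': "sat (space M) E y (restrict X {..<p}) \<phi>"
      using s by (subst sat_cong[where b = X]) (use fvp in auto)
    have r: "restrict X {..<p} \<in> PiE {..<p} (\<lambda>_. space M)"
      unfolding restrict_PiE_iff using PiE_mem[OF XP] by simp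
    have sh: "shf p q X \<in> space (PM q)"
      unfolding shf_def space_PiM restrict_PiE_iff using PiE_mem[OF XP] by simp
    show "X \<in> {X \<in> PiE {..<p+q} (\<lambda>_. space M). restrict X {..<p} \<in> defset (space M) E y p \<phi> \<and> shf p q X \<in> space (PM q)}"
      using XP s' r sh by (simp add: defset_def)
  next
    fix X assume X: "X \<in> {X \<in> PiE {..<p+q} (\<lambda>_. space M). restrict X {..<p} \<in> defset (space M) E y p \<phi> \<and> shf p q X \<in> space (PM q)}"
    then have XP: "X \<in> PiE {..<p+q} (\<lambda>_. space M)" and s: "sat (space M) E y (restrict X {..<p}) \<phi>"
      unfolding defset_def by blast+
    have s': "sat (space M) E y X \<phi>"
      using s by (subst (asm) sat_cong[where b = X]) (use fvp in auto)
    show "X \<in> defset (space M) E y P \<phi>" using XP s' by (simp add: defset_def P)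
  qed
  have "measure (PM P) (defset (space M) E y P \<phi>) = measure (PM p) (defset (space M) E y p \<phi>) * measure (PM q) (space (PM q))"
    unfolding eq unfolding P by (rule block2(2)[OF A B])
  also have "measure (PM q) (space (PM q)) = 1" using prob_space.prob_space[OF prob_PM] .
  finally show ?thesis by simp
qed

definition bset :: "nat \<Rightarrow> nat \<Rightarrow> (nat \<Rightarrow> (nat \<Rightarrow> 'b) set) \<Rightarrow> (nat \<Rightarrow> 'b) set" where
  "bset P s A = {X \<in> PiE {..<s*P} (\<lambda>_. space M). \<forall>j<s. shf (j*P) P X \<in> A j}"

lemma blocks:
  assumes "\<And>j. j < s \<Longrightarrow> A j \<in> sets (PM P)"
  shows "bset P s A \<in> sets (PM (s*P)) \<and> measure (PM (s*P)) (bset P s A) = (\<Prod>j<s. measure (PM P) (A j))"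
  using assms
proof (induction s)
  case 0
  have "bset P 0 A = space (PM 0)" by (simp add: bset_def space_PiM)
  then show ?case using prob_space.prob_space[OF prob_PM, of 0] by simp
next
  case (Suc s)
  have IH: "bset P s A \<in> sets (PM (s*P))" "measure (PM (s*P)) (bset P s A) = (\<Prod>j<s. measure (PM P) (A j))"
    using Suc by auto
  have As: "A s \<in> sets (PM P)" using Suc.prems by simp
  have sh: "shf (j*P) P (restrict X {..<s*P}) = shf (j*P) P X" if "j < s" for j and X :: "nat \<Rightarrow> 'b"
  proof -
    have "j*P + i < s*P" if "i < P" for i
    proof -
      have "j*P + i < j*P + P" using that by simp
      also have "\<dots> = Suc j * P" by simp
      also have "\<dots> \<le> s*P" using \<open>j < s\<close> by (intro mult_le_mono1) simp
      finally show ?thesis .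
    qed
    then show ?thesis by (auto simp: shf_def fun_eq_iff)
  qed
  have SP: "Suc s * P = s * P + P" by simp
  have eq: "bset P (Suc s) A = {X \<in> PiE {..<s*P+P} (\<lambda>_. space M). restrict X {..<s*P} \<in> bset P s A \<and> shf (s*P) P X \<in> A s}"
  proof (intro set_eqI iffI)
    fix X assume X: "X \<in> bset P (Suc s) A"
    then have XP: "X \<in> PiE {..<s*P+P} (\<lambda>_. space M)" and bl: "\<forall>j<Suc s. shf (j*P) P X \<in> A j"
      unfolding bset_def SP by blast+
    have r: "restrict X {..<s*P} \<in> PiE {..<s*P} (\<lambda>_. space M)"
      unfolding restrict_PiE_iff using PiE_mem[OF XP] by simp
    have "\<forall>j<s. shf (j*P) P (restrict X {..<s*P}) \<in> A j"
      using bl sh by simp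
    then have "restrict X {..<s*P} \<in> bset P s A" using r unfolding bset_def by blast
    moreover have "shf (s*P) P X \<in> A s" using bl by simp
    ultimately show "X \<in> {X \<in> PiE {..<s*P+P} (\<lambda>_. space M). restrict X {..<s*P} \<in> bset P s A \<and> shf (s*P) P X \<in> A s}"
      using XP by blast
  next
    fix X assume X: "X \<in> {X \<in> PiE {..<s*P+P} (\<lambda>_. space M). restrict X {..<s*P} \<in> bset P s A \<and> shf (s*P) P X \<in> A s}"
    then have XP: "X \<in> PiE {..<s*P+P} (\<lambda>_. space M)" and b: "restrict X {..<s*P} \<in> bset P s A"
      and l: "shf (s*P) P X \<in> A s" by blast+
    have b': "\<forall>j<s. shf (j*P) P (restrict X {..<s*P}) \<in> A j" using b unfolding bset_def by blast
    have "\<forall>j<Suc s. shf (j*P) P X \<in> A j"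
    proof (intro allI impI)
      fix j assume "j < Suc s"
      then consider "j < s" | "j = s" by linarith
      then show "shf (j*P) P X \<in> A j"
      proof cases
        case 1 then show ?thesis using b' sh[OF 1, of X] by metis
      qed (use l in simp)
    qed
    then show "X \<in> bset P (Suc s) A" using XP unfolding bset_def SP by blast
  qed
  show ?case
    using block2[OF IH(1) As] IH(2) unfolding eq SP by (simp add: ac_simps)
qed

lemma sum_measure_eq:
  fixes C :: "'i set" and Ys :: "'j set"
  assumes "finite C" "finite Ys"
    and "\<And>c. c \<in> C \<Longrightarrow> A c \<in> sets N" "\<And>y. y \<in> Ys \<Longrightarrow> B y \<in> sets N"
    and "prob_space N"
    and "\<And>x. x \<in> space N \<Longrightarrow> (\<Sum>c\<in>C. indicator (A c) x) = (\<Sum>y\<in>Ys. indicator (B y) x :: real)"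
  shows "(\<Sum>c\<in>C. measure N (A c)) = (\<Sum>y\<in>Ys. measure N (B y))"
proof -
  interpret N: prob_space N by fact
  have intA: "integrable N (indicator (A c) :: _ \<Rightarrow> real)" if "c \<in> C" for c
    using assms(3)[OF that] by (intro integrable_real_indicator) (auto simp: less_top[symmetric])
  have intB: "integrable N (indicator (B y) :: _ \<Rightarrow> real)" if "y \<in> Ys" for y
    using assms(4)[OF that] by (intro integrable_real_indicator) (auto simp: less_top[symmetric])
  have "(\<Sum>c\<in>C. measure N (A c)) = (\<Sum>c\<in>C. integral\<^sup>L N (indicator (A c)))"
    using assms(3) by (intro sum.cong) (auto simp: Int_absorb2 sets.sets_into_space)
  also have "\<dots> = integral\<^sup>L N (\<lambda>x. \<Sum>c\<in>C. indicator (A c) x)"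
    using Bochner_Integration.integral_sum[of C N "\<lambda>c. indicator (A c)", OF intA] by simp
  also have "\<dots> = integral\<^sup>L N (\<lambda>x. \<Sum>y\<in>Ys. indicator (B y) x)"
    by (intro Bochner_Integration.integral_cong refl assms(6))
  also have "\<dots> = (\<Sum>y\<in>Ys. integral\<^sup>L N (indicator (B y)))"
    using Bochner_Integration.integral_sum[of Ys N "\<lambda>y. indicator (B y)", OF intB] by simp
  also have "\<dots> = (\<Sum>y\<in>Ys. measure N (B y))"
    using assms(4) by (intro sum.cong) (auto simp: Int_absorb2 sets.sets_into_space)
  finally show ?thesis .
qed

end

definition sig :: "nat \<Rightarrow> nat \<Rightarrow> nat \<Rightarrow> nat \<Rightarrow> nat" where
  "sig P N j i = (if i < P then j*P + i else N + 1 + i)"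

definition theta :: "fo \<Rightarrow> nat \<Rightarrow> (nat \<Rightarrow> fo) \<Rightarrow> nat list \<Rightarrow> fo" where
  "theta \<xi> P fs \<alpha> = FAnd (ren (\<lambda>i. if i = 0 then length \<alpha> * P else length \<alpha> * P + 1 + i) Root \<xi>)
     (fconj (map (\<lambda>j. ren (sig P (length \<alpha> * P) j) (Var (length \<alpha> * P)) (fs (\<alpha>!j))) [0..<length \<alpha>]))"

definition mom :: "fo \<Rightarrow> nat \<Rightarrow> (nat \<Rightarrow> fo) \<Rightarrow> nat list \<Rightarrow> nat \<Rightarrow> fo" where
  "mom \<xi> P fs \<alpha> c = atl (length \<alpha> * P) c (theta \<xi> P fs \<alpha>)"

lemma blk_lt: "(j::nat) < s \<Longrightarrow> i < P \<Longrightarrow> j*P + i < s*P"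
proof -
  assume a: "j < s" "i < P"
  have "j*P + i < j*P + P" using a by simp
  also have "\<dots> = Suc j * P" by simp
  also have "\<dots> \<le> s*P" using a by (intro mult_le_mono1) simp
  finally show ?thesis .
qed

lemma inj_sig: "inj (sig P N j)" if "j*P + P \<le> N + 1" for N
  unfolding inj_def sig_def using that by (auto split: if_splits)

lemma ok_sig: "j < s \<Longrightarrow> okroot (sig P (s*P) j) (Var (s*P))"
  unfolding okroot_def sig_def using blk_lt[of j s] by (auto split: if_splits) (metis less_irrefl)

lemma mom_FO:
  assumes xi: "\<xi> \<in> FO 1" and fs: "\<And>a. fv (fs a) \<subseteq> {..<P}"
  shows "mom \<xi> P fs \<alpha> c \<in> FO (length \<alpha> * P)"
proof -
  define N where "N = length \<alpha> * P"
  define \<rho> where "\<rho> = (\<lambda>i::nat. if i = 0 then N else N + 1 + i)"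
  have inj\<rho>: "inj \<rho>" unfolding inj_def \<rho>_def by auto
  have f1: "fv (ren \<rho> Root \<xi>) \<subseteq> {N}"
    using fv_ren[OF inj\<rho>, of Root \<xi>] xi by (auto simp: FO_def \<rho>_def)
  have f2: "fv (ren (sig P N j) (Var N) (fs (\<alpha>!j))) \<subseteq> {..<Suc N}" if "j < length \<alpha>" for j
  proof -
    have "j*P + P \<le> N + 1" using blk_lt[OF that, of "P - 1" P] that
      by (cases P) (auto simp: N_def)
    then have ij: "inj (sig P N j)" by (rule inj_sig)
    have "sig P N j ` fv (fs (\<alpha>!j)) \<subseteq> {..<N}"
      using fs[of "\<alpha>!j"] blk_lt[OF that] by (auto simp: sig_def N_def)
    then have "sig P N j ` fv (fs (\<alpha>!j)) \<union> tm_vars (Var N) \<subseteq> {..<Suc N}" by auto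
    then show ?thesis using fv_ren[OF ij, of "Var N" "fs (\<alpha>!j)"] by blast
  qed
  have theta_eq: "theta \<xi> P fs \<alpha> = FAnd (ren \<rho> Root \<xi>) (fconj (map (\<lambda>j. ren (sig P N j) (Var N) (fs (\<alpha>!j))) [0..<length \<alpha>]))"
    unfolding theta_def \<rho>_def N_def ..
  have "fv (theta \<xi> P fs \<alpha>) \<subseteq> {..<Suc N}"
    unfolding theta_eq fv.simps fv_fconj using f1 f2 by fastforce
  then have "fv (theta \<xi> P fs \<alpha>) - {N} \<subseteq> {..<N}" by (auto simp: less_Suc_eq)
  then have "fv (mom \<xi> P fs \<alpha> c) \<subseteq> {..<N}"
    using fv_atl[of N c "theta \<xi> P fs \<alpha>"] unfolding mom_def N_def by blast
  moreover have "\<not> uses_root (mom \<xi> P fs \<alpha> c)"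
    unfolding mom_def
    by (rule uses_root_atl) (use xi in \<open>auto simp: theta_def uses_root_fconj uses_root_ren_root uses_root_ren_var FO_def\<close>)
  ultimately show ?thesis by (simp add: FO_def N_def)
qed


lemma sat_theta:
  assumes xi: "\<xi> \<in> FO 1" and fs: "\<And>a. fv (fs a) \<subseteq> {..<P}" and y: "y \<in> V"
  shows "sat V E r (X(length \<alpha> * P := y)) (theta \<xi> P fs \<alpha>) \<longleftrightarrow>
    sat V E undefined (\<lambda>_. y) \<xi> \<and> (\<forall>j<length \<alpha>. sat V E y (shf (j*P) P X) (fs (\<alpha>!j)))"
proof -
  define N where "N = length \<alpha> * P"
  define \<rho> where "\<rho> = (\<lambda>i::nat. if i = 0 then N else N + 1 + i)"
  have inj\<rho>: "inj \<rho>" unfolding inj_def \<rho>_def by auto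
  have theta_eq: "theta \<xi> P fs \<alpha> = FAnd (ren \<rho> Root \<xi>) (fconj (map (\<lambda>j. ren (sig P N j) (Var N) (fs (\<alpha>!j))) [0..<length \<alpha>]))"
    unfolding theta_def \<rho>_def N_def ..
  have 1: "sat V E r (X(N := y)) (ren \<rho> Root \<xi>) = sat V E undefined (\<lambda>_. y) \<xi>"
  proof -
    have "sat V E r (X(N := y)) (ren \<rho> Root \<xi>) = sat V E r (X(N := y) \<circ> \<rho>) \<xi>"
      by (simp add: sat_ren[OF inj\<rho>] okroot_def)
    also have "\<dots> = sat V E undefined (X(N := y) \<circ> \<rho>) \<xi>"
      by (rule sat_noroot) (use xi in \<open>simp add: FO_def\<close>)
    also have "\<dots> = sat V E undefined (\<lambda>_. y) \<xi>"
    proof (rule sat_cong)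
      fix i assume "i \<in> fv \<xi>"
      then have "i = 0" using xi by (auto simp: FO_def)
      then show "(X(N := y) \<circ> \<rho>) i = y" by (simp add: \<rho>_def)
    qed
    finally show ?thesis .
  qed
  have 2: "sat V E r (X(N := y)) (ren (sig P N j) (Var N) (fs (\<alpha>!j))) = sat V E y (shf (j*P) P X) (fs (\<alpha>!j))"
    if j: "j < length \<alpha>" for j
  proof -
    have "j*P + P \<le> N + 1" using blk_lt[OF j, of "P - 1" P] j
      by (cases P) (auto simp: N_def)
    then have ij: "inj (sig P N j)" by (rule inj_sig)
    have ok: "okroot (sig P N j) (Var N)" unfolding N_def by (rule ok_sig[OF j])
    have "sat V E r (X(N := y)) (ren (sig P N j) (Var N) (fs (\<alpha>!j))) = sat V E y (X(N := y) \<circ> sig P N j) (fs (\<alpha>!j))"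
      by (simp add: sat_ren[OF ij ok])
    also have "\<dots> = sat V E y (shf (j*P) P X) (fs (\<alpha>!j))"
    proof (rule sat_cong)
      fix i assume "i \<in> fv (fs (\<alpha>!j))"
      then have i: "i < P" using fs by auto
      then have "j*P + i < N" using blk_lt[OF j i] by (simp add: N_def)
      then show "(X(N := y) \<circ> sig P N j) i = shf (j*P) P X i"
        using i by (simp add: sig_def shf_def)
    qed
    finally show ?thesis .
  qed
  have 3: "sat V E r (X(N := y)) (fconj (map (\<lambda>j. ren (sig P N j) (Var N) (fs (\<alpha>!j))) [0..<length \<alpha>]))
      \<longleftrightarrow> (\<forall>j<length \<alpha>. sat V E y (shf (j*P) P X) (fs (\<alpha>!j)))"
    unfolding sat_fconj using 2 by auto
  show ?thesis unfolding N_def[symmetric] theta_eq sat.simps 1 3 ..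
qed

context fstr
begin

lemma sum_le_card: "(\<Sum>c\<in>{1..K}. if c \<le> n then 1 else 0 :: real) = real (min n K)"
  by (induction K) (auto simp: min_def)

lemma moment_identity:
  assumes xi: "\<xi> \<in> FO 1" and fs: "\<And>a. fv (fs a) \<subseteq> {..<P}"
    and Y: "Y = {v \<in> space M. sat (space M) E undefined (\<lambda>_. v) \<xi>}" and finY: "finite Y"
    and K: "card Y \<le> K"
  shows "(\<Sum>c\<in>{1..K}. measure (PM (length \<alpha> * P)) (defset (space M) E undefined (length \<alpha> * P) (mom \<xi> P fs \<alpha> c)))
       = (\<Sum>y\<in>Y. \<Prod>j<length \<alpha>. measure (PM P) (defset (space M) E y P (fs (\<alpha>!j))))"
proof -
  define N where "N = length \<alpha> * P"
  define s where "s = length \<alpha>"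
  define D where "D = (\<lambda>y j. defset (space M) E y P (fs (\<alpha>!j)))"
  have Ysp: "Y \<subseteq> space M" using Y by auto
  have Dm: "D y j \<in> sets (PM P)" if "y \<in> Y" for y j
    unfolding D_def by (rule defset_meas) (use that Ysp fs in auto)
  have bl: "bset P s (D y) \<in> sets (PM (s*P)) \<and> measure (PM (s*P)) (bset P s (D y)) = (\<Prod>j<s. measure (PM P) (D y j))"
    if "y \<in> Y" for y
    by (rule blocks) (use Dm that in auto)
  define Yb where "Yb = (\<lambda>X. {y \<in> Y. \<forall>j<s. shf (j*P) P X \<in> D y j})"
  have shP: "shf (j*P) P X \<in> PiE {..<P} (\<lambda>_. space M)" if X: "X \<in> PiE {..<N} (\<lambda>_. space M)" and j: "j < s" for X j
    unfolding shf_def restrict_PiE_iff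
  proof
    fix i assume "i \<in> {..<P}"
    then have "j*P + i < N" using blk_lt[OF j, of i] by (simp add: N_def s_def)
    then show "X (j*P + i) \<in> space M" using PiE_mem[OF X] by simp
  qed
  have setq: "{v \<in> space M. sat (space M) E undefined (X(N:=v)) (theta \<xi> P fs \<alpha>)} = Yb X"
    if X: "X \<in> PiE {..<N} (\<lambda>_. space M)" for X
  proof -
    have "sat (space M) E undefined (X(N:=v)) (theta \<xi> P fs \<alpha>) \<longleftrightarrow> v \<in> Y \<and> (\<forall>j<s. shf (j*P) P X \<in> D v j)"
      if v: "v \<in> space M" for v
    proof -
      have "sat (space M) E undefined (X(N:=v)) (theta \<xi> P fs \<alpha>) \<longleftrightarrow>
          sat (space M) E undefined (\<lambda>_. v) \<xi> \<and> (\<forall>j<s. sat (space M) E v (shf (j*P) P X) (fs (\<alpha>!j)))"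
        unfolding N_def s_def by (rule sat_theta[OF xi fs v])
      moreover have "sat (space M) E v (shf (j*P) P X) (fs (\<alpha>!j)) \<longleftrightarrow> shf (j*P) P X \<in> D v j" if "j < s" for j
        using shP[OF X that] by (simp add: D_def defset_def)
      ultimately show ?thesis using v Y by auto
    qed
    then show ?thesis by (auto simp: Yb_def Y)
  qed
  have finYb: "finite (Yb X)" for X using finY by (simp add: Yb_def)
  have cardYb: "card (Yb X) \<le> K" for X
    using card_mono[OF finY, of "Yb X"] K by (auto simp: Yb_def)
  have momset: "X \<in> defset (space M) E undefined N (mom \<xi> P fs \<alpha> c) \<longleftrightarrow> c \<le> card (Yb X)"
    if X: "X \<in> PiE {..<N} (\<lambda>_. space M)" for X c
  proof -
    have "X \<in> defset (space M) E undefined N (mom \<xi> P fs \<alpha> c) \<longleftrightarrow> sat (space M) E undefined X (mom \<xi> P fs \<alpha> c)"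
      using X by (simp add: defset_def)
    also have "\<dots> \<longleftrightarrow> c \<le> card {v \<in> space M. sat (space M) E undefined (X(N:=v)) (theta \<xi> P fs \<alpha>)}"
      unfolding mom_def N_def[symmetric]
      by (rule sat_atl) (use setq[OF X] finYb in simp)
    finally show ?thesis using setq[OF X] by simp
  qed
  have bset_mem: "X \<in> bset P s (D y) \<longleftrightarrow> (\<forall>j<s. shf (j*P) P X \<in> D y j)"
    if X: "X \<in> PiE {..<N} (\<lambda>_. space M)" for X y
    using X by (simp add: bset_def N_def s_def)
  have "(\<Sum>c\<in>{1..K}. measure (PM N) (defset (space M) E undefined N (mom \<xi> P fs \<alpha> c)))
       = (\<Sum>y\<in>Y. measure (PM N) (bset P s (D y)))"
  proof (rule sum_measure_eq)
    show "defset (space M) E undefined N (mom \<xi> P fs \<alpha> c) \<in> sets (PM N)" for c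
      unfolding N_def by (rule meas[OF mom_FO[OF xi fs]])
    show "bset P s (D y) \<in> sets (PM N)" if "y \<in> Y" for y
      using bl[OF that] by (simp add: N_def s_def)
    show "prob_space (PM N)" by (rule prob_PM)
    fix X assume "X \<in> space (PM N)"
    then have X: "X \<in> PiE {..<N} (\<lambda>_. space M)" by (simp add: space_PiM)
    have "(\<Sum>c\<in>{1..K}. indicator (defset (space M) E undefined N (mom \<xi> P fs \<alpha> c)) X :: real)
        = (\<Sum>c\<in>{1..K}. if c \<le> card (Yb X) then 1 else 0)"
      by (rule sum.cong) (auto simp: momset[OF X] indicator_def)
    also have "\<dots> = real (card (Yb X))" using sum_le_card cardYb[of X] by (simp add: min_def)
    also have "\<dots> = (\<Sum>y\<in>Y. of_bool (X \<in> bset P s (D y)))"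
      using finY by (simp add: bset_mem[OF X] Yb_def Int_def)
    finally show "(\<Sum>c\<in>{1..K}. indicator (defset (space M) E undefined N (mom \<xi> P fs \<alpha> c)) X)
        = (\<Sum>y\<in>Y. indicator (bset P s (D y)) X :: real)"
      by (simp add: indicator_def)
  qed (use finY in auto)
  also have "\<dots> = (\<Sum>y\<in>Y. \<Prod>j<s. measure (PM P) (D y j))"
    by (rule sum.cong) (use bl in \<open>auto simp: N_def s_def\<close>)
  finally show ?thesis by (simp add: N_def s_def D_def)
qed

end

lemma fin_sets:
  fixes p :: nat
  assumes V: "finite V" and S: "S \<subseteq> PiE {..<p} (\<lambda>_. V)"
  shows "S \<in> sets (PiM {..<p} (\<lambda>_. uniform_count_measure V))"
proof -
  have "finite (PiE {..<p} (\<lambda>_. V))" by (rule finite_PiE) (use V in auto)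
  then have finS: "finite S" using finite_subset[OF S] by blast
  have sing: "{x} \<in> sets (PiM {..<p} (\<lambda>_. uniform_count_measure V))" if "x \<in> S" for x
  proof -
    have x: "x \<in> PiE {..<p} (\<lambda>_. V)" using that S by auto
    then have "{x} = PiE {..<p} (\<lambda>i. {x i})" using PiE_singleton[of x "{..<p}"] by (simp add: PiE_iff)
    also have "\<dots> \<in> sets (PiM {..<p} (\<lambda>_. uniform_count_measure V))"
      by (rule sets_PiM_I_finite) (use x in \<open>auto simp: sets_uniform_count_measure dest: PiE_mem\<close>)
    finally show ?thesis .
  qed
  have "S = (\<Union>x\<in>S. {x})" by auto
  also have "\<dots> \<in> sets (PiM {..<p} (\<lambda>_. uniform_count_measure V))"
    by (rule sets.finite_UN[OF finS sing])
  finally show ?thesis .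
qed

lemma fin_measure:
  assumes V: "finite V" "V \<noteq> {}" and S: "S \<subseteq> PiE {..<p} (\<lambda>_. V)"
  shows "measure (PiM {..<p} (\<lambda>_. uniform_count_measure V)) S = real (card S) / real (card V) ^ p"
proof -
  let ?U = "uniform_count_measure V"
  let ?P = "PiM {..<p} (\<lambda>_. ?U)"
  interpret U: prob_space ?U by (rule prob_space_uniform_count_measure[OF V])
  interpret F: finite_product_sigma_finite "\<lambda>_. ?U" "{..<p}"
    by standard (auto simp: prob_space_imp_sigma_finite U.prob_space_axioms)
  have "finite (PiE {..<p} (\<lambda>_. V))" by (rule finite_PiE) (use V in auto)
  then have finS: "finite S" using finite_subset[OF S] by blast
  have sing: "{x} \<in> sets ?P" if "x \<in> S" for x
    by (rule fin_sets[OF V(1)]) (use that S in auto)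
  have em: "emeasure ?P {x} = ennreal ((1 / real (card V)) ^ p)" if "x \<in> S" for x
  proof -
    have x: "x \<in> PiE {..<p} (\<lambda>_. V)" using that S by auto
    then have "{x} = PiE {..<p} (\<lambda>i. {x i})" using PiE_singleton[of x "{..<p}"] by (simp add: PiE_iff)
    moreover have "{x i} \<in> sets ?U" if "i \<in> {..<p}" for i
      using PiE_mem[OF x that] by (simp add: sets_uniform_count_measure)
    ultimately have "emeasure ?P {x} = (\<Prod>i<p. emeasure ?U {x i})"
      using F.measure_times[of "\<lambda>i. {x i}"] by simp
    also have "\<dots> = (\<Prod>i<p. ennreal (1 / real (card V)))"
    proof (rule prod.cong)
      fix i assume "i \<in> {..<p}"
      then have "x i \<in> V" using PiE_mem[OF x] by simp
      then show "emeasure ?U {x i} = ennreal (1 / real (card V))"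
        using V by (simp add: U.emeasure_eq_measure measure_uniform_count_measure)
    qed simp
    also have "\<dots> = ennreal ((1 / real (card V)) ^ p)"
      by (simp add: prod_ennreal ennreal_power)
    finally show ?thesis .
  qed
  have "measure ?P S = (\<Sum>x\<in>S. measure ?P {x})"
    by (rule measure_eq_sum_singleton[OF finS sing]) (use em in auto)
  also have "\<dots> = (\<Sum>x\<in>S. (1 / real (card V)) ^ p)"
    by (rule sum.cong) (use em in \<open>auto simp: measure_def\<close>)
  also have "\<dots> = real (card S) / real (card V) ^ p"
    by (simp add: power_one_over divide_inverse power_inverse)
  finally show ?thesis .
qed

lemma stone_fin_eq:
  assumes V: "finite V" "V \<noteq> {}"
  shows "stone_fin V E r p \<phi> = stone_mod (uniform_count_measure V) E r p \<phi>"
proof (cases "p = 0")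
  case True then show ?thesis by (simp add: stone_fin_def stone_mod_def space_uniform_count_measure)
next
  case False
  have "defset V E r p \<phi> \<subseteq> PiE {..<p} (\<lambda>_. V)" by (auto simp: defset_def)
  then show ?thesis using False fin_measure[OF V]
    by (simp add: stone_fin_def stone_mod_def space_uniform_count_measure)
qed

lemma fstr_fin:
  assumes V: "finite V" "V \<noteq> {}"
  shows "fstr (uniform_count_measure V) E"
proof -
  have "defset (space (uniform_count_measure V)) E undefined p \<phi> \<in> sets (PiM {..<p} (\<lambda>_. uniform_count_measure V))" for p \<phi>
    by (rule fin_sets[OF V(1)]) (auto simp: defset_def space_uniform_count_measure)
  then show ?thesis unfolding fstr_def using prob_space_uniform_count_measure[OF V] by blast
qed

type_synonym pl = "(real \<times> nat list) list"

definition ev :: "pl \<Rightarrow> (nat \<Rightarrow> real) \<Rightarrow> real" where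
  "ev ps z = (\<Sum>(c, \<alpha>)\<leftarrow>ps. c * prod_list (map z \<alpha>))"

definition pmul :: "pl \<Rightarrow> pl \<Rightarrow> pl" where
  "pmul ps qs = concat (map (\<lambda>(c, \<alpha>). map (\<lambda>(d, \<beta>). (c * d, \<alpha> @ \<beta>)) qs) ps)"

lemma ev_Nil[simp]: "ev [] z = 0" by (simp add: ev_def)
lemma ev_Cons[simp]: "ev ((c, \<alpha>) # ps) z = c * prod_list (map z \<alpha>) + ev ps z" by (simp add: ev_def)
lemma ev_append[simp]: "ev (ps @ qs) z = ev ps z + ev qs z" by (simp add: ev_def)

lemma ev_pmul: "ev (pmul ps qs) z = ev ps z * ev qs z"
proof (induction ps)
  case Nil then show ?case by (simp add: pmul_def)
next
  case (Cons x ps)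
  obtain c \<alpha> where x: "x = (c, \<alpha>)" by (cases x)
  have "ev (map (\<lambda>(d, \<beta>). (c * d, \<alpha> @ \<beta>)) qs) z = c * prod_list (map z \<alpha>) * ev qs z"
    by (induction qs) (auto simp: algebra_simps)
  moreover have "pmul (x # ps) qs = map (\<lambda>(d, \<beta>). (c * d, \<alpha> @ \<beta>)) qs @ pmul ps qs"
    by (simp add: pmul_def x)
  ultimately show ?case using Cons by (simp add: x algebra_simps)
qed

definition pone :: pl where "pone = [(1, [])]"
lemma ev_pone[simp]: "ev pone z = 1" by (simp add: pone_def)

definition pprod :: "pl list \<Rightarrow> pl" where "pprod qs = foldr pmul qs pone"
lemma ev_pprod: "ev (pprod qs) z = prod_list (map (\<lambda>q. ev q z) qs)"
  by (induction qs) (auto simp: pprod_def ev_pmul)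

definition dd :: "nat \<Rightarrow> (nat \<Rightarrow> real) \<Rightarrow> (nat \<Rightarrow> real) \<Rightarrow> real" where
  "dd m w t = (\<Sum>a<m. (w a - t a)^2)"

definition sqd :: "nat \<Rightarrow> (nat \<Rightarrow> real) \<Rightarrow> pl" where
  "sqd m t = concat (map (\<lambda>a. [(1, [a, a]), (-2 * t a, [a]), ((t a)^2, [])]) [0..<m])"

lemma ev_sqd: "ev (sqd m t) z = dd m z t"
  by (induction m) (auto simp: sqd_def dd_def power2_eq_square algebra_simps)

lemma dd_nonneg: "dd m w t \<ge> 0" by (simp add: dd_def sum_nonneg)

lemma dd_cong: "(\<And>a. a < m \<Longrightarrow> w a = w' a) \<Longrightarrow> (\<And>a. a < m \<Longrightarrow> t a = t' a) \<Longrightarrow> dd m w t = dd m w' t'"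
  by (simp add: dd_def)

lemma dd_comm: "dd m w t = dd m t w"
  by (simp add: dd_def power2_commute)

lemma dd_self: "dd m w w = 0" by (simp add: dd_def)

lemma coord_le_dd: "a < m \<Longrightarrow> (w a - t a)^2 \<le> dd m w t"
  unfolding dd_def by (rule member_le_sum) auto

lemma prod_list_pos': "(\<forall>x\<in>set xs. x > 0) \<Longrightarrow> prod_list xs > (0::real)"
  by (induction xs) auto

lemma ev_conv:
  fixes A :: "nat \<Rightarrow> 'y set" and vG :: "nat \<Rightarrow> 'y \<Rightarrow> nat \<Rightarrow> real"
    and Y :: "'z set" and vL :: "'z \<Rightarrow> nat \<Rightarrow> real"
  assumes mom: "\<And>\<alpha>. (\<lambda>n. \<Sum>y\<in>A n. prod_list (map (vG n y) \<alpha>)) \<longlonglongrightarrow> (\<Sum>y\<in>Y. prod_list (map (vL y) \<alpha>))"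
  shows "(\<lambda>n. \<Sum>y\<in>A n. ev ps (vG n y)) \<longlonglongrightarrow> (\<Sum>y\<in>Y. ev ps (vL y))"
proof (induction ps)
  case Nil then show ?case by simp
next
  case (Cons x ps)
  obtain c \<alpha> where x: "x = (c, \<alpha>)" by (cases x)
  have "(\<lambda>n. c * (\<Sum>y\<in>A n. prod_list (map (vG n y) \<alpha>)) + (\<Sum>y\<in>A n. ev ps (vG n y)))
      \<longlonglongrightarrow> c * (\<Sum>y\<in>Y. prod_list (map (vL y) \<alpha>)) + (\<Sum>y\<in>Y. ev ps (vL y))"
    by (intro tendsto_intros mom Cons)
  then show ?case by (simp add: x sum.distrib sum_distrib_left)
qed

lemma analytic:
  fixes A :: "nat \<Rightarrow> 'y set" and vG :: "nat \<Rightarrow> 'y \<Rightarrow> nat \<Rightarrow> real"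
    and Y :: "'z set" and vL :: "'z \<Rightarrow> nat \<Rightarrow> real"
  assumes finY: "finite Y"
    and mom: "\<And>\<alpha>. (\<lambda>n. \<Sum>y\<in>A n. prod_list (map (vG n y) \<alpha>)) \<longlonglongrightarrow> (\<Sum>y\<in>Y. prod_list (map (vL y) \<alpha>))"
    and r0: "r0 \<in> Y" and \<delta>: "\<delta> > 0"
  shows "eventually (\<lambda>n. \<exists>y\<in>A n. dd m (vG n y) (vL r0) < \<delta>) sequentially"
proof -
  define t where "t = vL r0"
  obtain ys where ys: "set ys = {y\<in>Y. dd m (vL y) t \<noteq> 0}"
    using finite_list[of "{y\<in>Y. dd m (vL y) t \<noteq> 0}"] finY by auto
  define F where "F = pprod (map (\<lambda>y. sqd m (vL y)) ys)"
  define G where "G = pmul (sqd m t) F"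
  have evF: "ev F z = prod_list (map (\<lambda>y. dd m z (vL y)) ys)" for z
    by (simp add: F_def ev_pprod ev_sqd o_def)
  have evG: "ev G z = dd m z t * ev F z" for z
    by (simp add: G_def ev_pmul ev_sqd)
  have Fnn: "ev F z \<ge> 0" for z
    unfolding evF by (rule prod_list_nonneg) (auto simp: dd_nonneg)
  have G0: "(\<Sum>y\<in>Y. ev G (vL y)) = 0"
  proof (rule sum.neutral, rule ballI)
    fix y assume y: "y \<in> Y"
    show "ev G (vL y) = 0"
    proof (cases "dd m (vL y) t = 0")
      case True then show ?thesis by (simp add: evG)
    next
      case False
      then have "y \<in> set ys" using ys y by auto
      then have "0 \<in> set (map (\<lambda>y'. dd m (vL y) (vL y')) ys)" by (force simp: dd_self)
      then have "ev F (vL y) = 0" by (simp add: evF prod_list_zero_iff)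
      then show ?thesis by (simp add: evG)
    qed
  qed
  define LF where "LF = (\<Sum>y\<in>Y. ev F (vL y))"
  have "ev F t > 0"
  proof -
    have "\<forall>x\<in>set (map (\<lambda>y. dd m t (vL y)) ys). x > 0"
    proof
      fix x assume "x \<in> set (map (\<lambda>y. dd m t (vL y)) ys)"
      then obtain y where "y \<in> set ys" "x = dd m t (vL y)" by auto
      then show "x > 0" using ys dd_nonneg[of m t "vL y"] dd_comm[of m t "vL y"]
        by (auto simp: less_le)
    qed
    then show ?thesis unfolding evF by (rule prod_list_pos')
  qed
  moreover have "ev F t \<le> LF"
    unfolding LF_def t_def by (rule member_le_sum) (use r0 Fnn finY in auto)
  ultimately have LF: "LF > 0" by linarith
  have cF: "(\<lambda>n. \<Sum>y\<in>A n. ev F (vG n y)) \<longlonglongrightarrow> LF"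
    unfolding LF_def by (rule ev_conv[OF mom])
  have cG: "(\<lambda>n. \<Sum>y\<in>A n. ev G (vG n y)) \<longlonglongrightarrow> 0"
    using ev_conv[OF mom, of G] G0 by simp
  have e1: "eventually (\<lambda>n. (\<Sum>y\<in>A n. ev F (vG n y)) > LF / 2) sequentially"
    using order_tendstoD(1)[OF cF, of "LF/2"] LF by simp
  have e2: "eventually (\<lambda>n. (\<Sum>y\<in>A n. ev G (vG n y)) < \<delta> * LF / 2) sequentially"
    using order_tendstoD(2)[OF cG, of "\<delta> * LF / 2"] LF \<delta> by simp
  show ?thesis
    using eventually_conj[OF e1 e2]
  proof (rule eventually_mono)
    fix n assume n: "(\<Sum>y\<in>A n. ev F (vG n y)) > LF / 2 \<and> (\<Sum>y\<in>A n. ev G (vG n y)) < \<delta> * LF / 2"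
    show "\<exists>y\<in>A n. dd m (vG n y) (vL r0) < \<delta>"
    proof (rule ccontr)
      assume "\<not> ?thesis"
      then have ge: "dd m (vG n y) t \<ge> \<delta>" if "y \<in> A n" for y using that by (auto simp: t_def not_less)
      have "(\<Sum>y\<in>A n. \<delta> * ev F (vG n y)) \<le> (\<Sum>y\<in>A n. ev G (vG n y))"
        unfolding evG by (rule sum_mono) (use ge Fnn in \<open>auto intro: mult_right_mono\<close>)
      then have "\<delta> * (\<Sum>y\<in>A n. ev F (vG n y)) \<le> (\<Sum>y\<in>A n. ev G (vG n y))"
        by (simp add: sum_distrib_left)
      moreover have "\<delta> * (LF / 2) < \<delta> * (\<Sum>y\<in>A n. ev F (vG n y))"
        using n \<delta> by (intro mult_strict_left_mono) auto
      ultimately show False using n by simp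
    qed
  qed
qed

instance tm :: countable by countable_datatype
instance fo :: countable by countable_datatype

lemma prod_list_map_nth: "prod_list (map z \<alpha>) = (\<Prod>j<length \<alpha>. z (\<alpha>!j))"
proof (induction \<alpha>)
  case Nil then show ?case by simp
next
  case (Cons x xs)
  then show ?case by (simp add: prod.lessThan_Suc_shift del: prod.lessThan_Suc)
qed

lemma count_sent:
  assumes xi: "\<xi> \<in> FO 1" and fin: "finite {v\<in>Vx. sat Vx Ed undefined (\<lambda>_. v) \<xi>}"
  shows "sat Vx Ed r a (FNot (atl 0 (Suc k) \<xi>)) \<longleftrightarrow> card {v\<in>Vx. sat Vx Ed undefined (\<lambda>_. v) \<xi>} \<le> k"
proof -
  have eq: "{v\<in>Vx. sat Vx Ed r (a(0:=v)) \<xi>} = {v\<in>Vx. sat Vx Ed undefined (\<lambda>_. v) \<xi>}"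
  proof -
    have "sat Vx Ed r (a(0:=v)) \<xi> = sat Vx Ed undefined (a(0:=v)) \<xi>" for v
      by (rule sat_noroot) (use xi in \<open>simp add: FO_def\<close>)
    moreover have "sat Vx Ed undefined (a(0:=v)) \<xi> = sat Vx Ed undefined (\<lambda>_. v) \<xi>" for v
      by (rule sat_cong) (use xi in \<open>auto simp: FO_def\<close>)
    ultimately show ?thesis by simp
  qed
  show ?thesis
    using sat_atl[of Vx Ed r a 0 \<xi> "Suc k"] fin unfolding eq by (simp del: atl.simps add: not_le less_Suc_eq_le)
qed

lemma count_sent_FO: "\<xi> \<in> FO 1 \<Longrightarrow> FNot (atl 0 (Suc k) \<xi>) \<in> FO 0"
  using fv_atl[of 0 "Suc k" \<xi>] uses_root_atl[of \<xi> 0 "Suc k"] by (auto simp: FO_def)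

theorem theorem1:
  fixes V :: "nat \<Rightarrow> 'a set" and E :: "nat \<Rightarrow> 'a \<Rightarrow> 'a \<Rightarrow> bool"
    and M :: "'b measure" and EL :: "'b \<Rightarrow> 'b \<Rightarrow> bool" and r :: 'b
  assumes "\<And>n. finite_graph (V n) (E n)"
    and "FO_convergent V E"
    and "modeling_limit M EL V E"
    and "r \<in> space M"
    and "algebraic_vertex (space M) EL r"
  shows "\<exists>rs :: nat \<Rightarrow> 'a. (\<forall>n. rs n \<in> V n) \<and>
           (\<forall>p. \<forall>\<phi>\<in>FO_rooted p.
              (\<lambda>n. stone_fin (V n) (E n) (rs n) p \<phi>) \<longlonglongrightarrow> stone_mod M EL r p \<phi>)"
proof -
  have finV: "finite (V n)" "V n \<noteq> {}" for n using assms(1) by (auto simp: finite_graph_def)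
  define U where "U = (\<lambda>n. uniform_count_measure (V n))"
  have spU: "space (U n) = V n" for n by (simp add: U_def space_uniform_count_measure)
  have fG: "fstr (U n) (E n)" for n unfolding U_def by (rule fstr_fin[OF finV])
  have fL: "fstr M EL" using assms(3) by (auto simp: modeling_limit_def modeling_def fstr_def)
  have lim: "(\<lambda>n. stone_fin (V n) (E n) undefined p \<phi>) \<longlonglongrightarrow> stone_mod M EL undefined p \<phi>"
    if "\<phi> \<in> FO p" for p \<phi>
    using assms(3) that by (auto simp: modeling_limit_def)
  obtain \<xi> where xi: "\<xi> \<in> FO 1" and finY: "finite {v\<in>space M. sat (space M) EL undefined (\<lambda>_. v) \<xi>}"
    and rY: "r \<in> {v\<in>space M. sat (space M) EL undefined (\<lambda>_. v) \<xi>}"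
    using assms(5) unfolding algebraic_vertex_def by blast
  define Y where "Y = {v\<in>space M. sat (space M) EL undefined (\<lambda>_. v) \<xi>}"
  define Yn where "Yn = (\<lambda>n. {v\<in>V n. sat (V n) (E n) undefined (\<lambda>_. v) \<xi>})"
  define k where "k = card Y"
  have finYn: "finite (Yn n)" for n using finV by (simp add: Yn_def)
  have evk: "eventually (\<lambda>n. card (Yn n) \<le> k) sequentially"
  proof -
    define chs where "chs = FNot (atl 0 (Suc k) \<xi>)"
    have L1: "stone_mod M EL undefined 0 chs = 1"
      using count_sent[OF xi finY, of undefined "\<lambda>_. undefined" k]
      by (simp add: stone_mod_def Y_def k_def chs_def del: atl.simps)
    have G: "stone_fin (V n) (E n) undefined 0 chs = (if card (Yn n) \<le> k then 1 else 0)" for n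
      using count_sent[OF xi, of "V n" "E n" undefined "\<lambda>_. undefined" k] finYn[of n]
      by (simp add: stone_fin_def Yn_def chs_def del: atl.simps)
    have "(\<lambda>n. stone_fin (V n) (E n) undefined 0 chs) \<longlonglongrightarrow> 1"
      using lim[OF count_sent_FO[OF xi, of k]] L1 by (simp add: chs_def del: atl.simps)
    then have "eventually (\<lambda>n. stone_fin (V n) (E n) undefined 0 chs > 1/2) sequentially"
      by (rule order_tendstoD) simp
    then show ?thesis by (rule eventually_mono) (simp add: G split: if_splits)
  qed
  have KL: "eventually (\<lambda>n. \<exists>y\<in>V n. \<forall>a<m. \<bar>stone_fin (V n) (E n) y (fst (fp a)) (snd (fp a))
                 - stone_mod M EL r (fst (fp a)) (snd (fp a))\<bar> < \<epsilon>) sequentially"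
    if hfp: "\<And>a. snd (fp a) \<in> FO_rooted (fst (fp a))" and \<epsilon>: "\<epsilon> > 0" for m :: nat and fp :: "nat \<Rightarrow> nat \<times> fo" and \<epsilon> :: real
  proof -
    define P where "P = (\<Sum>a<m. fst (fp a))"
    define fs where "fs = (\<lambda>a. if a < m then snd (fp a) else FFalse)"
    have leP: "fst (fp a) \<le> P" if "a < m" for a
      unfolding P_def by (rule member_le_sum) (use that in auto)
    have fsP: "fv (fs a) \<subseteq> {..<P}" for a
    proof (cases "a < m")
      case True
      then show ?thesis using hfp[of a] leP[OF True] by (auto simp: fs_def FO_rooted_def)
    qed (simp add: fs_def)
    define vL where "vL = (\<lambda>y a. measure (PiM {..<P} (\<lambda>_. M)) (defset (space M) EL y P (fs a)))"
    define vG where "vG = (\<lambda>n y a. measure (PiM {..<P} (\<lambda>_. U n)) (defset (V n) (E n) y P (fs a)))"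
    have momc: "(\<lambda>n. \<Sum>y\<in>Yn n. prod_list (map (vG n y) \<alpha>)) \<longlonglongrightarrow> (\<Sum>y\<in>Y. prod_list (map (vL y) \<alpha>))" for \<alpha>
    proof -
      define N where "N = length \<alpha> * P"
      have eL: "(\<Sum>y\<in>Y. prod_list (map (vL y) \<alpha>)) = (\<Sum>c\<in>{1..k}. stone_mod M EL undefined N (mom \<xi> P fs \<alpha> c))"
        using fstr.moment_identity[OF fL xi fsP Y_def finY[folded Y_def], of k \<alpha>]
        by (simp add: k_def vL_def prod_list_map_nth stone_mod_measure N_def)
      have eG: "eventually (\<lambda>n. (\<Sum>c\<in>{1..k}. stone_fin (V n) (E n) undefined N (mom \<xi> P fs \<alpha> c))
                  = (\<Sum>y\<in>Yn n. prod_list (map (vG n y) \<alpha>))) sequentially"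
      proof (rule eventually_mono[OF evk])
        fix n assume cn: "card (Yn n) \<le> k"
        have Yn': "Yn n = {v \<in> space (U n). sat (space (U n)) (E n) undefined (\<lambda>_. v) \<xi>}"
          by (simp add: Yn_def spU)
        show "(\<Sum>c\<in>{1..k}. stone_fin (V n) (E n) undefined N (mom \<xi> P fs \<alpha> c))
                  = (\<Sum>y\<in>Yn n. prod_list (map (vG n y) \<alpha>))"
          using fstr.moment_identity[OF fG xi fsP Yn' finYn cn, of \<alpha>]
          by (simp add: vG_def prod_list_map_nth stone_mod_measure N_def stone_fin_eq[OF finV] U_def
                        space_uniform_count_measure)
      qed
      have "(\<lambda>n. \<Sum>c\<in>{1..k}. stone_fin (V n) (E n) undefined N (mom \<xi> P fs \<alpha> c))
              \<longlonglongrightarrow> (\<Sum>c\<in>{1..k}. stone_mod M EL undefined N (mom \<xi> P fs \<alpha> c))"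
        by (intro tendsto_sum lim) (simp add: N_def mom_FO[OF xi fsP])
      then show ?thesis using Lim_transform_eventually eG eL by fastforce
    qed
    have an: "eventually (\<lambda>n. \<exists>y\<in>Yn n. dd m (vG n y) (vL r) < \<epsilon>^2) sequentially"
      by (rule analytic[OF finY[folded Y_def] momc rY[folded Y_def]]) (use \<epsilon> in simp)
    show ?thesis
    proof (rule eventually_mono[OF an])
      fix n assume "\<exists>y\<in>Yn n. dd m (vG n y) (vL r) < \<epsilon>^2"
      then obtain y where y: "y \<in> Yn n" and d: "dd m (vG n y) (vL r) < \<epsilon>^2" by blast
      have yV: "y \<in> V n" using y by (simp add: Yn_def)
      have "\<bar>stone_fin (V n) (E n) y (fst (fp a)) (snd (fp a)) - stone_mod M EL r (fst (fp a)) (snd (fp a))\<bar> < \<epsilon>"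
        if a: "a < m" for a
      proof -
        have fva: "fv (fs a) \<subseteq> {..<fst (fp a)}" using hfp[of a] a by (simp add: fs_def FO_rooted_def)
        have eqG: "vG n y a = stone_fin (V n) (E n) y (fst (fp a)) (snd (fp a))"
          using fstr.padding[OF fG[of n], where y=y and \<phi>="fs a" and p="fst (fp a)" and P=P] yV fva leP[OF a] a
          by (simp add: vG_def stone_fin_eq[OF finV] stone_mod_measure spU fs_def U_def space_uniform_count_measure)
        have eqL: "vL r a = stone_mod M EL r (fst (fp a)) (snd (fp a))"
          using fstr.padding[OF fL, where y=r and \<phi>="fs a" and p="fst (fp a)" and P=P] assms(4) fva leP[OF a] a
          by (simp add: vL_def stone_mod_measure fs_def)
        have "(vG n y a - vL r a)^2 < \<epsilon>^2" using coord_le_dd[OF a, of "vG n y" "vL r"] d by linarith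
        then have "\<bar>vG n y a - vL r a\<bar> < \<epsilon>"
          using power2_less_imp_less[of "\<bar>vG n y a - vL r a\<bar>" \<epsilon>] \<epsilon> by simp
        then show ?thesis using eqG eqL by simp
      qed
      then show "\<exists>y\<in>V n. \<forall>a<m. \<bar>stone_fin (V n) (E n) y (fst (fp a)) (snd (fp a))
                 - stone_mod M EL r (fst (fp a)) (snd (fp a))\<bar> < \<epsilon>" using yV by blast
    qed
  qed
  define en :: "nat \<Rightarrow> nat \<times> fo" where "en = from_nat"
  define fp :: "nat \<Rightarrow> nat \<times> fo" where
    "fp = (\<lambda>a. if snd (en a) \<in> FO_rooted (fst (en a)) then en a else (0, FFalse))"
  have hfp: "snd (fp a) \<in> FO_rooted (fst (fp a))" for a by (simp add: fp_def FO_rooted_def)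
  define good where "good = (\<lambda>m n y. \<forall>a<m. \<bar>stone_fin (V n) (E n) y (fst (fp a)) (snd (fp a))
                 - stone_mod M EL r (fst (fp a)) (snd (fp a))\<bar> < 1 / (real m + 1))"
  have evg: "eventually (\<lambda>n. \<exists>y\<in>V n. good m n y) sequentially" for m
    using KL[OF hfp, of "1 / (real m + 1)" m] by (simp add: good_def)
  define lev where "lev = (\<lambda>n. Max {m. m \<le> n \<and> (\<exists>y\<in>V n. good m n y)})"
  have levin: "\<exists>y\<in>V n. good (lev n) n y" for n
  proof -
    have fin: "finite {m. m \<le> n \<and> (\<exists>y\<in>V n. good m n y)}" by simp
    have "0 \<in> {m. m \<le> n \<and> (\<exists>y\<in>V n. good m n y)}" using finV(2)[of n] by (auto simp: good_def)
    then have "lev n \<in> {m. m \<le> n \<and> (\<exists>y\<in>V n. good m n y)}"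
      unfolding lev_def by (intro Max_in fin) auto
    then show ?thesis by simp
  qed
  have levge: "eventually (\<lambda>n. m \<le> lev n) sequentially" for m
  proof -
    from evg[of m] obtain N where N: "\<And>n. n \<ge> N \<Longrightarrow> \<exists>y\<in>V n. good m n y"
      by (auto simp: eventually_sequentially)
    have "m \<le> lev n" if "n \<ge> max N m" for n
      unfolding lev_def by (rule Max_ge) (use that N in auto)
    then show ?thesis unfolding eventually_sequentially by blast
  qed
  define rs where "rs = (\<lambda>n. SOME y. y \<in> V n \<and> good (lev n) n y)"
  have rs: "rs n \<in> V n \<and> good (lev n) n (rs n)" for n
  proof -
    have "\<exists>y. y \<in> V n \<and> good (lev n) n y" using levin[of n] by blast
    then show ?thesis unfolding rs_def by (rule someI_ex)
  qed
  show ?thesis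
  proof (intro exI[of _ rs] conjI allI ballI)
    show "rs n \<in> V n" for n using rs by blast
    fix p \<phi> assume \<phi>: "\<phi> \<in> FO_rooted p"
    obtain a where a: "en a = (p, \<phi>)" unfolding en_def using surj_from_nat by (metis surjD)
    have fpa: "fp a = (p, \<phi>)" using \<phi> a by (simp add: fp_def)
    show "(\<lambda>n. stone_fin (V n) (E n) (rs n) p \<phi>) \<longlonglongrightarrow> stone_mod M EL r p \<phi>"
    proof (rule tendstoI)
      fix e :: real assume e: "e > 0"
      obtain m0 :: nat where m0: "inverse (real (Suc m0)) < e" using reals_Archimedean[OF e] by blast
      define m where "m = max m0 (Suc a)"
      have mm0: "1 / (real m + 1) \<le> 1 / (real m0 + 1)" by (simp add: m_def frac_le)
      show "eventually (\<lambda>n. dist (stone_fin (V n) (E n) (rs n) p \<phi>) (stone_mod M EL r p \<phi>) < e) sequentially"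
      proof (rule eventually_mono[OF levge[of m]])
        fix n assume mn: "m \<le> lev n"
        have "a < lev n" using mn by (simp add: m_def)
        then have "\<bar>stone_fin (V n) (E n) (rs n) p \<phi> - stone_mod M EL r p \<phi>\<bar> < 1 / (real (lev n) + 1)"
          using rs[of n] fpa unfolding good_def by fastforce
        also have "\<dots> \<le> 1 / (real m + 1)" using mn by (simp add: frac_le)
        also have "\<dots> \<le> 1 / (real m0 + 1)" by (rule mm0)
        also have "\<dots> < e" using m0 by (simp add: inverse_eq_divide add.commute)
        finally show "dist (stone_fin (V n) (E n) (rs n) p \<phi>) (stone_mod M EL r p \<phi>) < e"
          by (simp add: dist_real_def)
      qed
    qed
  qed
qed

end
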